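(* Let $H=(V,E)$ be a hypergraph such that the digraph $\mathcal D_3(H)$ has a non-trivial spanning arborescence. Then $H$ is eulerian.
   Context: A hypergraph $H=(V,E)$ consists of a finite nonempty vertex set $V$, a finite edge set $E$ disjoint from $V$, and an incidence function assigning to each edge $e\in E$ a subset of $V$ (also denoted $e$); distinct edges may have the same vertex set. Hypergraphs are assumed to have no empty edges. A walk is a sequence $W=v_0e_1v_1e_2\cdots e_kv_k$ with $v_i\in V$, $e_i\in E$, such that for each $i$, $v_{i-1}\ne v_i$ and $v_{i-1},v_i\in e_i$. $W$ is closed if $k\ge 2$ and $v_0=v_k$; it is a strict trail if $e_1,\dots,e_k$ are pairwise distinct. An Euler tour of $H$ is a closed strict trail traversing every edge of $H$; $H$ is eulerian if it has one. $\mathcal D_3(H)$ is the digraph with vertex set $E$ and arc set $\{(e,f): e,f\in E,\ |f\setminus e|=1,\ |e\cap f|\ge 3\}$. An arborescence is a digraph whose underlying undirected graph is a tree and whose arcs are all directed towards a root; it is non-trivial if it has at least two vertices. *)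

theory Defs
  imports Main
begin

text \<open>A hypergraph is given by a vertex set V (of type 'v), an edge set E (of a
separate type 'e, so V and E are disjoint) and an incidence function inc
assigning to each edge its vertex set. Distinct edges may share a vertex set.\<close>

definition hypergraph :: "'v set \<Rightarrow> 'e set \<Rightarrow> ('e \<Rightarrow> 'v set) \<Rightarrow> bool" where
  "hypergraph V E inc \<longleftrightarrow> finite V \<and> V \<noteq> {} \<and> finite E \<and>
     (\<forall>e\<in>E. inc e \<subseteq> V \<and> inc e \<noteq> {})"

text \<open>A walk v0 e1 v1 ... ek vk is represented by the vertex list vs = [v0,...,vk]
and the edge list es = [e1,...,ek].\<close>

definition walk :: "'v set \<Rightarrow> 'e set \<Rightarrow> ('e \<Rightarrow> 'v set) \<Rightarrow> 'v list \<Rightarrow> 'e list \<Rightarrow> bool" where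
  "walk V E inc vs es \<longleftrightarrow> length vs = length es + 1 \<and> set vs \<subseteq> V \<and> set es \<subseteq> E \<and>
     (\<forall>i < length es. vs ! i \<noteq> vs ! (i+1) \<and> vs ! i \<in> inc (es ! i) \<and> vs ! (i+1) \<in> inc (es ! i))"

definition closed_walk :: "'v set \<Rightarrow> 'e set \<Rightarrow> ('e \<Rightarrow> 'v set) \<Rightarrow> 'v list \<Rightarrow> 'e list \<Rightarrow> bool" where
  "closed_walk V E inc vs es \<longleftrightarrow> walk V E inc vs es \<and> length es \<ge> 2 \<and> hd vs = last vs"

definition strict_trail :: "'v set \<Rightarrow> 'e set \<Rightarrow> ('e \<Rightarrow> 'v set) \<Rightarrow> 'v list \<Rightarrow> 'e list \<Rightarrow> bool" where
  "strict_trail V E inc vs es \<longleftrightarrow> walk V E inc vs es \<and> distinct es"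

definition euler_tour :: "'v set \<Rightarrow> 'e set \<Rightarrow> ('e \<Rightarrow> 'v set) \<Rightarrow> 'v list \<Rightarrow> 'e list \<Rightarrow> bool" where
  "euler_tour V E inc vs es \<longleftrightarrow> closed_walk V E inc vs es \<and> strict_trail V E inc vs es \<and> set es = E"

definition eulerian :: "'v set \<Rightarrow> 'e set \<Rightarrow> ('e \<Rightarrow> 'v set) \<Rightarrow> bool" where
  "eulerian V E inc \<longleftrightarrow> (\<exists>vs es. euler_tour V E inc vs es)"

definition D3_arcs :: "'e set \<Rightarrow> ('e \<Rightarrow> 'v set) \<Rightarrow> ('e \<times> 'e) set" where
  "D3_arcs E inc = {(e, f). e \<in> E \<and> f \<in> E \<and> card (inc f - inc e) = 1 \<and> card (inc e \<inter> inc f) \<ge> 3}"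

text \<open>The underlying undirected (multi)graph of the finite digraph (N, A) is a tree:
it is loopless, connected, and has exactly |N| - 1 edges.\<close>

definition underlying_tree :: "'a set \<Rightarrow> ('a \<times> 'a) set \<Rightarrow> bool" where
  "underlying_tree N A \<longleftrightarrow> finite N \<and> N \<noteq> {} \<and> A \<subseteq> N \<times> N \<and> (\<forall>x. (x, x) \<notin> A) \<and>
     card A + 1 = card N \<and> (\<forall>x\<in>N. \<forall>y\<in>N. (x, y) \<in> (A \<union> A\<inverse>)\<^sup>*)"

text \<open>(N, A) is an arborescence with root r: its underlying graph is a tree and all
arcs are directed towards r (equivalently, every vertex has a directed path to r).\<close>

definition arborescence :: "'a set \<Rightarrow> ('a \<times> 'a) set \<Rightarrow> 'a \<Rightarrow> bool" where
  "arborescence N A r \<longleftrightarrow> underlying_tree N A \<and> r \<in> N \<and> (\<forall>x\<in>N. (x, r) \<in> A\<^sup>*)"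

definition has_nontrivial_spanning_arborescence :: "'a set \<Rightarrow> ('a \<times> 'a) set \<Rightarrow> bool" where
  "has_nontrivial_spanning_arborescence N D \<longleftrightarrow>
     card N \<ge> 2 \<and> (\<exists>A r. A \<subseteq> D \<and> arborescence N A r)"

end

theory Submission
  imports Defs
begin

fun cw :: "('e \<Rightarrow> 'v set) \<Rightarrow> 'v list \<Rightarrow> 'e list \<Rightarrow> bool" where
  "cw inc [v] [] = True"
| "cw inc (v # w # vs) (e # es) = (v \<noteq> w \<and> v \<in> inc e \<and> w \<in> inc e \<and> cw inc (w # vs) es)"
| "cw inc _ _ = False"

lemma cw_len: "cw inc vs es \<Longrightarrow> length vs = length es + 1"
  by (induction inc vs es rule: cw.induct) auto

lemma cw_iff: "length vs = Suc (length es) \<Longrightarrow> cw inc vs es =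
  (\<forall>i<length es. vs ! i \<noteq> vs ! (i+1) \<and> vs ! i \<in> inc (es ! i) \<and> vs ! (i+1) \<in> inc (es ! i))"
proof (induction es arbitrary: vs)
  case Nil
  then obtain v where "vs = [v]" by (auto simp: length_Suc_conv)
  then show ?case by simp
next
  case (Cons e es)
  then obtain v w vs' where vs: "vs = v # w # vs'"
    by (cases vs; cases "tl vs") auto
  show ?case using Cons.IH[of "w # vs'"] Cons.prems unfolding vs
    by (simp add: All_less_Suc2)
qed

lemma walk_cw: "walk V E inc vs es \<longleftrightarrow> set vs \<subseteq> V \<and> set es \<subseteq> E \<and> cw inc vs es"
proof
  assume "walk V E inc vs es"
  then show "set vs \<subseteq> V \<and> set es \<subseteq> E \<and> cw inc vs es"
    unfolding walk_def using cw_iff[of vs es inc] by simp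
next
  assume a: "set vs \<subseteq> V \<and> set es \<subseteq> E \<and> cw inc vs es"
  then have "length vs = Suc (length es)" using cw_len[of inc vs es] by simp
  then show "walk V E inc vs es"
    unfolding walk_def using a cw_iff[of vs es inc] by simp
qed

lemma cw_split: "length vs1 = length es1 \<Longrightarrow> cw inc (vs1 @ u # w # vs2) (es1 @ f # es2) =
   (cw inc (vs1 @ [u]) es1 \<and> u \<noteq> w \<and> u \<in> inc f \<and> w \<in> inc f \<and> cw inc (w # vs2) es2)"
proof (induction es1 arbitrary: vs1)
  case Nil
  then show ?case by simp
next
  case (Cons e es1)
  then obtain a vs1' where vs1: "vs1 = a # vs1'" by (cases vs1) auto
  show ?case
  proof (cases vs1')
    case Nil
    then show ?thesis using Cons vs1 by simp
  next
    case (Cons b vs1'')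
    then show ?thesis using Cons.IH[of vs1'] Cons.prems vs1 by simp
  qed
qed

lemma pick3: "card S \<ge> 3 \<Longrightarrow> \<exists>x\<in>S. x \<noteq> a \<and> x \<noteq> b"
proof (rule ccontr)
  assume c: "card S \<ge> 3" "\<not> (\<exists>x\<in>S. x \<noteq> a \<and> x \<noteq> b)"
  then have "S \<subseteq> {a,b}" by auto
  then have "card S \<le> card {a,b}" by (simp add: card_mono)
  also have "\<dots> \<le> 2" by (simp add: card_insert_if)
  finally show False using c by simp
qed

lemma split_len: "length vs = n + Suc (Suc m) \<Longrightarrow> \<exists>vs1 u w vs2. vs = vs1 @ u # w # vs2 \<and> length vs1 = n"
proof -
  assume l: "length vs = n + Suc (Suc m)"
  let ?r = "drop n vs"
  have "length ?r = Suc (Suc m)" using l by simp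
  then obtain u w vs2 where "?r = u # w # vs2" by (cases ?r; cases "tl ?r") auto
  then have "vs = take n vs @ u # w # vs2" by (metis append_take_drop_id)
  moreover have "length (take n vs) = n" using l by simp
  ultimately show ?thesis by blast
qed

lemma insert_tour:
  assumes H: "hypergraph V E inc" and tour: "euler_tour V T inc vs es"
    and "T \<subseteq> E" "f \<in> T" "e \<in> E" "e \<notin> T" and arc: "(e, f) \<in> D3_arcs E inc"
  shows "\<exists>vs es. euler_tour V (insert e T) inc vs es"
proof -
  from tour have w: "walk V T inc vs es" and d: "distinct es" and s: "set es = T"
    and hl: "hd vs = last vs"
    unfolding euler_tour_def closed_walk_def strict_trail_def by auto
  from w have c: "cw inc vs es" and sv: "set vs \<subseteq> V" by (auto simp: walk_cw)
  from \<open>f \<in> T\<close> s obtain es1 es2 where es: "es = es1 @ f # es2" by (metis split_list)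
  from cw_len[OF c] es have "length vs = length es1 + Suc (Suc (length es2))" by simp
  then obtain vs1 u w vs2 where vs: "vs = vs1 @ u # w # vs2" and l1: "length vs1 = length es1"
    using split_len by blast
  from c[unfolded vs es] cw_split[OF l1] have
    c1: "cw inc (vs1 @ [u]) es1" and uw: "u \<noteq> w" "u \<in> inc f" "w \<in> inc f"
    and c2: "cw inc (w # vs2) es2" by auto
  from arc have c1f: "card (inc f - inc e) = 1" and c3: "card (inc e \<inter> inc f) \<ge> 3"
    unfolding D3_arcs_def by auto
  obtain x where x: "x \<in> inc e" "x \<in> inc f" "x \<noteq> u" "x \<noteq> w"
    using pick3[OF c3, of u w] by auto
  have ue: "u \<in> inc e \<or> w \<in> inc e"
  proof (rule ccontr)
    assume "\<not> ?thesis"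
    then have "{u, w} \<subseteq> inc f - inc e" using uw by auto
    moreover have fi: "finite (inc f - inc e)" by (rule card_ge_0_finite) (simp add: c1f)
    ultimately have "card {u,w} \<le> 1" using c1f card_mono[OF fi] by simp
    then show False using uw by simp
  qed
  from H \<open>e \<in> E\<close> have eV: "inc e \<subseteq> V" unfolding hypergraph_def by auto
  let ?vs = "vs1 @ u # x # w # vs2"
  have sv': "set ?vs \<subseteq> V" using sv vs x eV by auto
  have hl': "hd ?vs = last ?vs" using hl vs by (simp add: hd_append split: if_splits)
  show ?thesis
  proof (cases "w \<in> inc e")
    case True
    let ?es = "es1 @ f # e # es2"
    have "cw inc ?vs ?es" using cw_split[OF l1, of inc u x "w # vs2" f "e # es2"]
      c1 c2 uw x True by simp
    moreover have "set ?es \<subseteq> insert e T" using s es by auto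
    moreover have "distinct ?es" using d es \<open>e \<notin> T\<close> s by auto
    moreover have "set ?es = insert e T" using s es by auto
    moreover have "length ?es \<ge> 2" by simp
    ultimately have "euler_tour V (insert e T) inc ?vs ?es"
      using sv' hl' unfolding euler_tour_def closed_walk_def strict_trail_def walk_cw
      by blast
    then show ?thesis by blast
  next
    case False
    then have ui: "u \<in> inc e" using ue by auto
    let ?es = "es1 @ e # f # es2"
    have "cw inc ?vs ?es" using cw_split[OF l1, of inc u x "w # vs2" e "f # es2"]
      c1 c2 uw x ui by simp
    moreover have "set ?es \<subseteq> insert e T" using s es by auto
    moreover have "distinct ?es" using d es \<open>e \<notin> T\<close> s by auto
    moreover have "set ?es = insert e T" using s es by auto
    moreover have "length ?es \<ge> 2" by simp
    ultimately have "euler_tour V (insert e T) inc ?vs ?es"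
      using sv' hl' unfolding euler_tour_def closed_walk_def strict_trail_def walk_cw
      by blast
    then show ?thesis by blast
  qed
qed

lemma cross: "(x, r) \<in> A\<^sup>* \<Longrightarrow> r \<in> T \<Longrightarrow> x \<notin> T \<Longrightarrow> \<exists>u v. (u, v) \<in> A \<and> u \<notin> T \<and> v \<in> T"
proof (induction rule: rtrancl_induct)
  case base
  then show ?case by simp
next
  case (step y z)
  then show ?case by (cases "y \<in> T") auto
qed

theorem corollary2p10:
  fixes V :: "'v set" and E :: "'e set" and inc :: "'e \<Rightarrow> 'v set"
  assumes "hypergraph V E inc"
    and "has_nontrivial_spanning_arborescence E (D3_arcs E inc)"
  shows "eulerian V E inc"
proof -
  from assms(2) obtain A r where AD: "A \<subseteq> D3_arcs E inc" and c2: "card E \<ge> 2"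
    and arb: "arborescence E A r"
    unfolding has_nontrivial_spanning_arborescence_def by auto
  from arb have rE: "r \<in> E" and reach: "\<forall>x\<in>E. (x, r) \<in> A\<^sup>*"
    unfolding arborescence_def by auto
  have fin: "finite E" using assms(1) unfolding hypergraph_def by auto
  have AE: "\<And>u v. (u,v) \<in> A \<Longrightarrow> u \<in> E \<and> v \<in> E" using AD unfolding D3_arcs_def by auto
  have "E \<noteq> {r}" using c2 by auto
  then obtain x where "x \<in> E" "x \<noteq> r" using rE by blast
  then obtain u v where uv: "(u,v) \<in> A" "u \<notin> {r}" "v \<in> {r}"
    using cross[of x r A "{r}"] reach by auto
  then have ur: "(u, r) \<in> D3_arcs E inc" using AD by auto
  then have c3: "card (inc u \<inter> inc r) \<ge> 3" and uE: "u \<in> E" unfolding D3_arcs_def by auto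
  obtain a where a: "a \<in> inc u \<inter> inc r" using pick3[OF c3] by blast
  obtain b where b: "b \<in> inc u \<inter> inc r" "b \<noteq> a" using pick3[OF c3, of a a] by blast
  have "inc u \<subseteq> V" "inc r \<subseteq> V" using assms(1) uE rE unfolding hypergraph_def by auto
  then have t0: "euler_tour V {u, r} inc [a, b, a] [u, r]"
    using a b uv unfolding euler_tour_def closed_walk_def strict_trail_def walk_cw by auto
  have grow: "\<And>n. \<forall>T. card (E - T) = n \<longrightarrow> T \<subseteq> E \<longrightarrow> r \<in> T \<longrightarrow>
      (\<exists>vs es. euler_tour V T inc vs es) \<longrightarrow> (\<exists>vs es. euler_tour V E inc vs es)"
  proof -
    fix n show "?thesis n"
    proof (induction n)
      case 0
      then show ?case using fin by (auto simp: Diff_eq_empty_iff dest: subset_antisym)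
    next
      case (Suc n)
      show ?case
      proof (intro allI impI)
        fix T assume cT: "card (E - T) = Suc n" and TE: "T \<subseteq> E" and rT: "r \<in> T"
          and tT: "\<exists>vs es. euler_tour V T inc vs es"
        then obtain y where y: "y \<in> E" "y \<notin> T" by (metis Diff_eq_empty_iff card_0_eq fin finite_Diff nat.distinct(1) subsetI)
        then obtain p q where pq: "(p,q) \<in> A" "p \<notin> T" "q \<in> T"
          using cross[of y r A T] reach rT by auto
        then have pE: "p \<in> E" using AE by auto
        from tT obtain vs es where "euler_tour V T inc vs es" by blast
        then obtain vs' es' where t': "euler_tour V (insert p T) inc vs' es'"
          using insert_tour[OF assms(1) _ TE pq(3) pE pq(2)] pq(1) AD by blast
        have "card (E - insert p T) = n" using cT pE pq(2) fin
          by (metis Diff_insert card_Diff_singleton diff_Suc_1 finite_Diff DiffI)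
        then show "\<exists>vs es. euler_tour V E inc vs es"
          using Suc.IH t' TE pE rT by blast
      qed
    qed
  qed
  have "{u, r} \<subseteq> E" using uE rE by auto
  then show ?thesis using grow t0 unfolding eulerian_def by blast
qed

end
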